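(* Let $\mathsf V$ be a pseudovariety of semigroupoids containing $\mathsf{Sl}$, $A$ a finite-vertex graph, and $B$ a retract subgraph of $A$. Then, identifying $\overline{\Omega}_B\mathsf V$ with its image in $\overline{\Omega}_A\mathsf V$ under the (injective) continuous homomorphism induced by the inclusion $B\to A$, the set $\overline{\Omega}_B\mathsf V$ is open in $\overline{\Omega}_A\mathsf V$.
   Context: A graph has vertices, edges and source/range maps; finite-vertex means finitely many vertices. A pseudovariety of semigroupoids is a class of finite semigroupoids closed under divisors, finite direct products and finite coproducts; $\mathsf{Sl}$ is the pseudovariety of finite semilattices. $\overline{\Omega}_A\mathsf V$ denotes the free pro-$\mathsf V$ semigroupoid over the finite-vertex graph $A$. A subgraph $B$ of $A$ is a retract subgraph if there is an onto graph morphism $r\colon A\to B$ with $r\circ i=\mathrm{id}_B$, where $i\colon B\to A$ is the inclusion; then the induced continuous homomorphism $\overline{\Omega}_B\mathsf V\to\overline{\Omega}_A\mathsf V$ is injective. *)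

theory Defs
  imports "HOL-Analysis.Analysis"
begin

record ('v, 'e) graph =
  gV :: "'v set"
  gE :: "'e set"
  gsrc :: "'e \<Rightarrow> 'v"
  gtgt :: "'e \<Rightarrow> 'v"

definition wf_graph :: "('v, 'e) graph \<Rightarrow> bool" where
  "wf_graph A \<longleftrightarrow> (\<forall>e\<in>gE A. gsrc A e \<in> gV A \<and> gtgt A e \<in> gV A)"

definition finite_vertex_graph :: "('v, 'e) graph \<Rightarrow> bool" where
  "finite_vertex_graph A \<longleftrightarrow> wf_graph A \<and> finite (gV A)"

definition subgraph :: "('v, 'e) graph \<Rightarrow> ('v, 'e) graph \<Rightarrow> bool" where
  "subgraph B A \<longleftrightarrow> wf_graph B \<and> gV B \<subseteq> gV A \<and> gE B \<subseteq> gE A \<and>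
     (\<forall>e\<in>gE B. gsrc B e = gsrc A e \<and> gtgt B e = gtgt A e)"

text \<open>Graph morphisms between graphs (pairs of vertex map and edge map, only their
  behaviour on the carriers matters).\<close>
definition graph_mor :: "('v, 'e) graph \<Rightarrow> ('w, 'f) graph \<Rightarrow> ('v \<Rightarrow> 'w) \<times> ('e \<Rightarrow> 'f) \<Rightarrow> bool" where
  "graph_mor A B r \<longleftrightarrow>
     (\<forall>x\<in>gV A. fst r x \<in> gV B) \<and>
     (\<forall>e\<in>gE A. snd r e \<in> gE B \<and> gsrc B (snd r e) = fst r (gsrc A e) \<and>
                gtgt B (snd r e) = fst r (gtgt A e))"

definition retract_subgraph :: "('v, 'e) graph \<Rightarrow> ('v, 'e) graph \<Rightarrow> bool" where
  "retract_subgraph B A \<longleftrightarrow> subgraph B A \<and>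
     (\<exists>r. graph_mor A B r \<and> fst r ` gV A = gV B \<and> snd r ` gE A = gE B \<and>
          (\<forall>x\<in>gV B. fst r x = x) \<and> (\<forall>e\<in>gE B. snd r e = e))"

text \<open>Edges compose as paths: comp s t is defined when the range of s is the source of t.\<close>
record ('v, 'e) sgd =
  sV :: "'v set"
  sE :: "'e set"
  ssrc :: "'e \<Rightarrow> 'v"
  stgt :: "'e \<Rightarrow> 'v"
  scomp :: "'e \<Rightarrow> 'e \<Rightarrow> 'e"

definition semigroupoid :: "('v, 'e) sgd \<Rightarrow> bool" where
  "semigroupoid S \<longleftrightarrow>
     (\<forall>e\<in>sE S. ssrc S e \<in> sV S \<and> stgt S e \<in> sV S) \<and>
     (\<forall>s\<in>sE S. \<forall>t\<in>sE S. stgt S s = ssrc S t \<longrightarrow>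
        scomp S s t \<in> sE S \<and> ssrc S (scomp S s t) = ssrc S s \<and> stgt S (scomp S s t) = stgt S t) \<and>
     (\<forall>s\<in>sE S. \<forall>t\<in>sE S. \<forall>u\<in>sE S. stgt S s = ssrc S t \<longrightarrow> stgt S t = ssrc S u \<longrightarrow>
        scomp S (scomp S s t) u = scomp S s (scomp S t u))"

definition finite_sgd :: "('v, 'e) sgd \<Rightarrow> bool" where
  "finite_sgd S \<longleftrightarrow> semigroupoid S \<and> finite (sV S) \<and> finite (sE S)"

definition ugraph :: "('v, 'e) sgd \<Rightarrow> ('v, 'e) graph" where
  "ugraph S = \<lparr>gV = sV S, gE = sE S, gsrc = ssrc S, gtgt = stgt S\<rparr>"

definition sgd_hom :: "('v, 'e) sgd \<Rightarrow> ('w, 'f) sgd \<Rightarrow> ('v \<Rightarrow> 'w) \<times> ('e \<Rightarrow> 'f) \<Rightarrow> bool" where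
  "sgd_hom S T h \<longleftrightarrow> graph_mor (ugraph S) (ugraph T) h \<and>
     (\<forall>s\<in>sE S. \<forall>t\<in>sE S. stgt S s = ssrc S t \<longrightarrow>
        snd h (scomp S s t) = scomp T (snd h s) (snd h t))"

definition sgd_iso :: "('v, 'e) sgd \<Rightarrow> ('w, 'f) sgd \<Rightarrow> bool" where
  "sgd_iso S T \<longleftrightarrow> (\<exists>h. sgd_hom S T h \<and> bij_betw (fst h) (sV S) (sV T) \<and>
                        bij_betw (snd h) (sE S) (sE T))"

definition sub_sgd :: "('v, 'e) sgd \<Rightarrow> ('v, 'e) sgd \<Rightarrow> bool" where
  "sub_sgd R T \<longleftrightarrow> semigroupoid R \<and> sV R \<subseteq> sV T \<and> sE R \<subseteq> sE T \<and>
     (\<forall>e\<in>sE R. ssrc R e = ssrc T e \<and> stgt R e = stgt T e) \<and>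
     (\<forall>s\<in>sE R. \<forall>t\<in>sE R. stgt R s = ssrc R t \<longrightarrow> scomp R s t = scomp T s t)"

definition sgd_divides :: "('v, 'e) sgd \<Rightarrow> ('w, 'f) sgd \<Rightarrow> bool" where
  "sgd_divides S T \<longleftrightarrow> (\<exists>R h. sub_sgd R T \<and> sgd_hom R S h \<and>
      fst h ` sV R = sV S \<and> snd h ` sE R = sE S)"

definition sgd_prod :: "('v, 'e) sgd \<Rightarrow> ('w, 'f) sgd \<Rightarrow> ('v \<times> 'w, 'e \<times> 'f) sgd" where
  "sgd_prod S T = \<lparr>sV = sV S \<times> sV T, sE = sE S \<times> sE T,
     ssrc = (\<lambda>(s, t). (ssrc S s, ssrc T t)), stgt = (\<lambda>(s, t). (stgt S s, stgt T t)),
     scomp = (\<lambda>(s, t) (s', t'). (scomp S s s', scomp T t t'))\<rparr>"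

definition sgd_coprod :: "('v, 'e) sgd \<Rightarrow> ('w, 'f) sgd \<Rightarrow> ('v + 'w, 'e + 'f) sgd" where
  "sgd_coprod S T = \<lparr>sV = Inl ` sV S \<union> Inr ` sV T, sE = Inl ` sE S \<union> Inr ` sE T,
     ssrc = case_sum (\<lambda>s. Inl (ssrc S s)) (\<lambda>t. Inr (ssrc T t)),
     stgt = case_sum (\<lambda>s. Inl (stgt S s)) (\<lambda>t. Inr (stgt T t)),
     scomp = (\<lambda>x y. case (x, y) of (Inl s, Inl s') \<Rightarrow> Inl (scomp S s s')
                                 | (Inr t, Inr t') \<Rightarrow> Inr (scomp T t t')
                                 | _ \<Rightarrow> undefined)\<rparr>"

text \<open>A pseudovariety of semigroupoids, represented (up to isomorphism) by its members
  whose vertices and edges are natural numbers (every finite semigroupoid has such a copy).\<close>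
definition pseudovariety :: "(nat, nat) sgd set \<Rightarrow> bool" where
  "pseudovariety \<V> \<longleftrightarrow>
     (\<forall>S\<in>\<V>. finite_sgd S) \<and>
     (\<forall>S T. S \<in> \<V> \<longrightarrow> finite_sgd T \<longrightarrow> sgd_iso S T \<longrightarrow> T \<in> \<V>) \<and>
     (\<forall>S T. T \<in> \<V> \<longrightarrow> finite_sgd S \<longrightarrow> sgd_divides S T \<longrightarrow> S \<in> \<V>) \<and>
     (\<forall>S T P. S \<in> \<V> \<longrightarrow> T \<in> \<V> \<longrightarrow> finite_sgd P \<longrightarrow> sgd_iso (sgd_prod S T) P \<longrightarrow> P \<in> \<V>) \<and>
     (\<forall>S T P. S \<in> \<V> \<longrightarrow> T \<in> \<V> \<longrightarrow> finite_sgd P \<longrightarrow> sgd_iso (sgd_coprod S T) P \<longrightarrow> P \<in> \<V>) \<and>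
     (\<forall>P. finite_sgd P \<longrightarrow> card (sV P) = 1 \<longrightarrow> card (sE P) = 1 \<longrightarrow> P \<in> \<V>)"

definition is_semilattice_sgd :: "('v, 'e) sgd \<Rightarrow> bool" where
  "is_semilattice_sgd S \<longleftrightarrow> finite_sgd S \<and> card (sV S) = 1 \<and> sE S \<noteq> {} \<and>
     (\<forall>s\<in>sE S. \<forall>t\<in>sE S. scomp S s t = scomp S t s) \<and> (\<forall>s\<in>sE S. scomp S s s = s)"

definition contains_Sl :: "(nat, nat) sgd set \<Rightarrow> bool" where
  "contains_Sl \<V> \<longleftrightarrow> (\<forall>S. is_semilattice_sgd S \<longrightarrow> S \<in> \<V>)"

type_synonym ('v, 'e) gmap = "('v \<Rightarrow> nat) \<times> ('e \<Rightarrow> nat)"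

definition idx :: "(nat, nat) sgd set \<Rightarrow> ('v, 'e) graph \<Rightarrow> ((nat, nat) sgd \<times> ('v, 'e) gmap) set" where
  "idx \<V> A = {(S, \<phi>). S \<in> \<V> \<and> graph_mor A (ugraph S) \<phi>}"

definition agree_on :: "('v, 'e) graph \<Rightarrow> ('v, 'e) gmap \<Rightarrow> ('v, 'e) gmap \<Rightarrow> bool" where
  "agree_on A \<phi> \<psi> \<longleftrightarrow> (\<forall>x\<in>gV A. fst \<phi> x = fst \<psi> x) \<and> (\<forall>e\<in>gE A. snd \<phi> e = snd \<psi> e)"

definition hcomp :: "(nat \<Rightarrow> nat) \<times> (nat \<Rightarrow> nat) \<Rightarrow> ('v, 'e) gmap \<Rightarrow> ('v, 'e) gmap" where
  "hcomp h \<phi> = (fst h \<circ> fst \<phi>, snd h \<circ> snd \<phi>)"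

text \<open>An edge of the free pro-V semigroupoid over A is a triple (u, v, w): u, v are its
  source and range (vertices of A), and w assigns to each (S, phi) in the index set an edge
  w(S,phi) of S from phi(u) to phi(v), naturally in S (commuting with all homomorphisms
  between members of V), depending only on phi restricted to A, and undefined off the index set.\<close>
definition free_pro :: "(nat, nat) sgd set \<Rightarrow> ('v, 'e) graph \<Rightarrow>
    ('v \<times> 'v \<times> ((nat, nat) sgd \<times> ('v, 'e) gmap \<Rightarrow> nat)) set" where
  "free_pro \<V> A = {(u, v, w). u \<in> gV A \<and> v \<in> gV A \<and>
     w \<in> extensional (idx \<V> A) \<and>
     (\<forall>(S, \<phi>)\<in>idx \<V> A. w (S, \<phi>) \<in> sE S \<and> ssrc S (w (S, \<phi>)) = fst \<phi> u \<and>
                          stgt S (w (S, \<phi>)) = fst \<phi> v) \<and>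
     (\<forall>(S, \<phi>)\<in>idx \<V> A. \<forall>\<psi>. (S, \<psi>) \<in> idx \<V> A \<longrightarrow> agree_on A \<phi> \<psi> \<longrightarrow> w (S, \<phi>) = w (S, \<psi>)) \<and>
     (\<forall>(S, \<phi>)\<in>idx \<V> A. \<forall>T h. T \<in> \<V> \<longrightarrow> sgd_hom S T h \<longrightarrow>
        snd h (w (S, \<phi>)) = w (T, hcomp h \<phi>))}"

definition free_pro_top :: "(nat, nat) sgd set \<Rightarrow> ('v, 'e) graph \<Rightarrow>
    ('v \<times> 'v \<times> ((nat, nat) sgd \<times> ('v, 'e) gmap \<Rightarrow> nat)) topology" where
  "free_pro_top \<V> A = subtopology
     (prod_topology (discrete_topology (gV A)) (prod_topology (discrete_topology (gV A))
        (product_topology (\<lambda>(S, \<phi>). discrete_topology (sE S)) (idx \<V> A))))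
     (free_pro \<V> A)"

text \<open>The continuous homomorphism induced by the inclusion B \<rightarrow> A: an implicit operation
  over B is evaluated on phi \<circ> i, which (as i is the inclusion) is phi itself.\<close>
definition incl_map :: "(nat, nat) sgd set \<Rightarrow> ('v, 'e) graph \<Rightarrow>
    ('v \<times> 'v \<times> ((nat, nat) sgd \<times> ('v, 'e) gmap \<Rightarrow> nat)) \<Rightarrow>
    ('v \<times> 'v \<times> ((nat, nat) sgd \<times> ('v, 'e) gmap \<Rightarrow> nat))" where
  "incl_map \<V> A x = (case x of (u, v, w) \<Rightarrow> (u, v, restrict w (idx \<V> A)))"

end

theory Submission
  imports Defs
begin

definition nprod :: "(nat,nat) sgd \<Rightarrow> (nat,nat) sgd \<Rightarrow> (nat,nat) sgd" where
  "nprod S T = \<lparr>sV = prod_encode ` (sV S \<times> sV T), sE = prod_encode ` (sE S \<times> sE T),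
    ssrc = (\<lambda>x. prod_encode (ssrc S (fst (prod_decode x)), ssrc T (snd (prod_decode x)))),
    stgt = (\<lambda>x. prod_encode (stgt S (fst (prod_decode x)), stgt T (snd (prod_decode x)))),
    scomp = (\<lambda>x y. prod_encode (scomp S (fst (prod_decode x)) (fst (prod_decode y)),
                                 scomp T (snd (prod_decode x)) (snd (prod_decode y))))\<rparr>"

lemma nprod_sgd: "semigroupoid S \<Longrightarrow> semigroupoid T \<Longrightarrow> semigroupoid (nprod S T)"
  unfolding semigroupoid_def nprod_def by (simp add: image_iff)

lemma nprod_finite: "finite_sgd S \<Longrightarrow> finite_sgd T \<Longrightarrow> finite_sgd (nprod S T)"
  unfolding finite_sgd_def using nprod_sgd by (auto simp: nprod_def)

lemma nprod_iso: "sgd_iso (sgd_prod S T) (nprod S T)"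
  unfolding sgd_iso_def
  apply (rule exI[of _ "(prod_encode, prod_encode)"])
  by (auto simp: sgd_hom_def graph_mor_def ugraph_def sgd_prod_def nprod_def inj_prod_encode bij_betw_def)

lemma nprod_in: "pseudovariety V \<Longrightarrow> S \<in> V \<Longrightarrow> T \<in> V \<Longrightarrow> nprod S T \<in> V"
  unfolding pseudovariety_def using nprod_iso nprod_finite by meson

definition np1 :: "(nat \<Rightarrow> nat) \<times> (nat \<Rightarrow> nat)" where
  "np1 = (\<lambda>x. fst (prod_decode x), \<lambda>x. fst (prod_decode x))"
definition np2 :: "(nat \<Rightarrow> nat) \<times> (nat \<Rightarrow> nat)" where
  "np2 = (\<lambda>x. snd (prod_decode x), \<lambda>x. snd (prod_decode x))"

lemma np1_hom: "sgd_hom (nprod S T) S np1"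
  by (auto simp: sgd_hom_def graph_mor_def ugraph_def nprod_def np1_def)
lemma np2_hom: "sgd_hom (nprod S T) T np2"
  by (auto simp: sgd_hom_def graph_mor_def ugraph_def nprod_def np2_def)

definition npair :: "('v,'e) gmap \<Rightarrow> ('v,'e) gmap \<Rightarrow> ('v,'e) gmap" where
  "npair \<phi> \<psi> = (\<lambda>x. prod_encode (fst \<phi> x, fst \<psi> x), \<lambda>x. prod_encode (snd \<phi> x, snd \<psi> x))"

lemma npair_mor: "graph_mor A (ugraph S) \<phi> \<Longrightarrow> graph_mor A (ugraph T) \<psi> \<Longrightarrow>
   graph_mor A (ugraph (nprod S T)) (npair \<phi> \<psi>)"
  by (auto simp: graph_mor_def ugraph_def nprod_def npair_def)

lemma hcomp_np1[simp]: "hcomp np1 (npair \<phi> \<psi>) = \<phi>"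
  by (auto simp: hcomp_def np1_def npair_def o_def)
lemma hcomp_np2[simp]: "hcomp np2 (npair \<phi> \<psi>) = \<psi>"
  by (auto simp: hcomp_def np2_def npair_def o_def)

lemma hcomp_mor: "graph_mor A (ugraph S) \<phi> \<Longrightarrow> sgd_hom S T h \<Longrightarrow> graph_mor A (ugraph T) (hcomp h \<phi>)"
  by (auto simp: graph_mor_def sgd_hom_def hcomp_def ugraph_def)

lemma sub_mor: "subgraph B A \<Longrightarrow> graph_mor A C \<phi> \<Longrightarrow> graph_mor B C \<phi>"
  by (auto simp: graph_mor_def subgraph_def)

definition S0 :: "(nat,nat) sgd" where
  "S0 = \<lparr>sV = {0}, sE = {0,1}, ssrc = (\<lambda>_. 0), stgt = (\<lambda>_. 0), scomp = (\<lambda>x y. x * y)\<rparr>"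

lemma S0_sl: "is_semilattice_sgd S0"
  by (auto simp: is_semilattice_sgd_def finite_sgd_def semigroupoid_def S0_def)

definition D1 :: "(nat,nat) sgd" where
  "D1 = \<lparr>sV = {0}, sE = {1}, ssrc = (\<lambda>_. 0), stgt = (\<lambda>_. 0), scomp = (\<lambda>x y. x * y)\<rparr>"

lemma D1_fin: "finite_sgd D1"
  by (auto simp: finite_sgd_def semigroupoid_def D1_def)

lemma D1_in: "pseudovariety V \<Longrightarrow> D1 \<in> V"
proof -
  assume "pseudovariety V"
  then have "\<forall>P. finite_sgd P \<longrightarrow> card (sV P) = 1 \<longrightarrow> card (sE P) = 1 \<longrightarrow> P \<in> V"
    unfolding pseudovariety_def by blast
  then show ?thesis using D1_fin by (simp add: D1_def)
qed

lemma D1_hom: "sgd_hom D1 S0 (id, id)"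
  by (auto simp: sgd_hom_def graph_mor_def ugraph_def D1_def S0_def)

definition Dsub :: "(nat,nat) sgd \<Rightarrow> (nat,nat) sgd" where
  "Dsub S = (nprod (nprod S S) S0)\<lparr>sE := {x \<in> sE (nprod (nprod S S) S0).
      snd (prod_decode x) \<noteq> 0 \<longrightarrow> fst (prod_decode (fst (prod_decode x))) = snd (prod_decode (fst (prod_decode x)))}\<rparr>"

lemma Dsub_E: "x \<in> sE (Dsub S) \<longleftrightarrow> (\<exists>a b c. x = prod_encode (prod_encode (a,b),c) \<and> a \<in> sE S \<and> b \<in> sE S \<and> c \<in> {0,1} \<and> (c \<noteq> 0 \<longrightarrow> a = b))"
  unfolding Dsub_def nprod_def S0_def by force

lemma Dsub_simps: "sV (Dsub S) = sV (nprod (nprod S S) S0)" "ssrc (Dsub S) = ssrc (nprod (nprod S S) S0)"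
  "stgt (Dsub S) = stgt (nprod (nprod S S) S0)" "scomp (Dsub S) = scomp (nprod (nprod S S) S0)"
  by (simp_all add: Dsub_def)

lemma Dsub_sE_sub: "sE (Dsub S) \<subseteq> sE (nprod (nprod S S) S0)"
  by (auto simp: Dsub_def)

lemma Dsub_comp: "s \<in> sE (Dsub S) \<Longrightarrow> t \<in> sE (Dsub S) \<Longrightarrow> scomp S0 0 0 = 0 \<Longrightarrow>
   semigroupoid S \<Longrightarrow> stgt (Dsub S) s = ssrc (Dsub S) t \<Longrightarrow> scomp (Dsub S) s t \<in> sE (Dsub S)"
proof -
  assume s: "s \<in> sE (Dsub S)" and t: "t \<in> sE (Dsub S)" and sg: "semigroupoid S" and st: "stgt (Dsub S) s = ssrc (Dsub S) t"
  obtain a b c where sa: "s = prod_encode (prod_encode (a,b),c)" "a \<in> sE S" "b \<in> sE S" "c \<in> {0,1}" "c \<noteq> 0 \<longrightarrow> a = b"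
    using s Dsub_E by blast
  obtain a' b' c' where ta: "t = prod_encode (prod_encode (a',b'),c')" "a' \<in> sE S" "b' \<in> sE S" "c' \<in> {0,1}" "c' \<noteq> 0 \<longrightarrow> a' = b'"
    using t Dsub_E by blast
  have "stgt S a = ssrc S a'" "stgt S b = ssrc S b'"
    using st by (simp_all add: Dsub_simps nprod_def sa ta prod_encode_eq)
  then have "scomp S a a' \<in> sE S" "scomp S b b' \<in> sE S" using sg sa ta unfolding semigroupoid_def by auto
  moreover have "scomp (Dsub S) s t = prod_encode (prod_encode (scomp S a a', scomp S b b'), c * c')"
    by (simp add: Dsub_simps nprod_def sa ta S0_def)
  ultimately show ?thesis using sa ta unfolding Dsub_E by auto
qed

lemma Dsub_sub: "semigroupoid S \<Longrightarrow> sub_sgd (Dsub S) (nprod (nprod S S) S0)"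
proof -
  assume s: "semigroupoid S"
  have s0: "semigroupoid S0" using S0_sl by (simp add: is_semilattice_sgd_def finite_sgd_def)
  have P: "semigroupoid (nprod (nprod S S) S0)" using s s0 nprod_sgd by blast
  have c: "scomp S0 0 0 = 0" by (simp add: S0_def)
  have "semigroupoid (Dsub S)"
    unfolding semigroupoid_def
  proof (intro conjI ballI impI)
    fix e assume "e \<in> sE (Dsub S)"
    then have "e \<in> sE (nprod (nprod S S) S0)" using Dsub_sE_sub by blast
    then show "ssrc (Dsub S) e \<in> sV (Dsub S)" "stgt (Dsub S) e \<in> sV (Dsub S)"
      using P unfolding semigroupoid_def Dsub_simps by auto
  next
    fix s' t assume a: "s' \<in> sE (Dsub S)" "t \<in> sE (Dsub S)" "stgt (Dsub S) s' = ssrc (Dsub S) t"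
    then show "scomp (Dsub S) s' t \<in> sE (Dsub S)" using Dsub_comp[OF _ _ c s] by blast
    have "s' \<in> sE (nprod (nprod S S) S0)" "t \<in> sE (nprod (nprod S S) S0)" using a Dsub_sE_sub by blast+
    then show "ssrc (Dsub S) (scomp (Dsub S) s' t) = ssrc (Dsub S) s'"
         "stgt (Dsub S) (scomp (Dsub S) s' t) = stgt (Dsub S) t"
      using P a unfolding semigroupoid_def Dsub_simps by auto
  next
    fix s' t u assume a: "s' \<in> sE (Dsub S)" "t \<in> sE (Dsub S)" "u \<in> sE (Dsub S)"
      "stgt (Dsub S) s' = ssrc (Dsub S) t" "stgt (Dsub S) t = ssrc (Dsub S) u"
    have "s' \<in> sE (nprod (nprod S S) S0)" "t \<in> sE (nprod (nprod S S) S0)" "u \<in> sE (nprod (nprod S S) S0)" using a Dsub_sE_sub by blast+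
    then show "scomp (Dsub S) (scomp (Dsub S) s' t) u = scomp (Dsub S) s' (scomp (Dsub S) t u)"
      using P a unfolding semigroupoid_def Dsub_simps by auto
  qed
  then show ?thesis unfolding sub_sgd_def using Dsub_sE_sub by (simp add: Dsub_simps)
qed

lemma open_coord: "k \<in> I \<Longrightarrow> openin (product_topology (\<lambda>(S, \<phi>). discrete_topology (sE S)) I) {w \<in> topspace (product_topology (\<lambda>(S, \<phi>). discrete_topology (sE S)) I). w k = c}"
proof -
  assume k: "k \<in> I"
  have "openin (product_topology (\<lambda>(S, \<phi>). discrete_topology (sE S)) I) {w \<in> topspace (product_topology (\<lambda>(S, \<phi>). discrete_topology (sE S)) I). w k \<in> {c} \<inter> sE (fst k)}"
    using openin_continuous_map_preimage[OF continuous_map_product_projection[OF k], of "\<lambda>(S, \<phi>). discrete_topology (sE S)" "{c} \<inter> sE (fst k)"]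
    by (cases k) auto
  moreover have "{w \<in> topspace (product_topology (\<lambda>(S, \<phi>). discrete_topology (sE S)) I). w k \<in> {c} \<inter> sE (fst k)}
     = {w \<in> topspace (product_topology (\<lambda>(S, \<phi>). discrete_topology (sE S)) I). w k = c}"
    using k by (cases k) (auto simp: PiE_iff)
  ultimately show ?thesis by simp
qed

lemma free_proD:
  assumes "(u, v, w) \<in> free_pro V A"
  shows "u \<in> gV A" "v \<in> gV A" "w \<in> extensional (idx V A)"
    "\<And>S \<phi>. (S, \<phi>) \<in> idx V A \<Longrightarrow> w (S, \<phi>) \<in> sE S"
    "\<And>S \<phi>. (S, \<phi>) \<in> idx V A \<Longrightarrow> ssrc S (w (S, \<phi>)) = fst \<phi> u"
    "\<And>S \<phi>. (S, \<phi>) \<in> idx V A \<Longrightarrow> stgt S (w (S, \<phi>)) = fst \<phi> v"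
    "\<And>S \<phi> \<psi>. (S, \<phi>) \<in> idx V A \<Longrightarrow> (S, \<psi>) \<in> idx V A \<Longrightarrow> agree_on A \<phi> \<psi> \<Longrightarrow> w (S, \<phi>) = w (S, \<psi>)"
    "\<And>S \<phi> T h. (S, \<phi>) \<in> idx V A \<Longrightarrow> T \<in> V \<Longrightarrow> sgd_hom S T h \<Longrightarrow> snd h (w (S, \<phi>)) = w (T, hcomp h \<phi>)"
  using assms unfolding free_pro_def by fast+

lemma idx_iff: "(S, \<phi>) \<in> idx V A \<longleftrightarrow> S \<in> V \<and> graph_mor A (ugraph S) \<phi>"
  by (simp add: idx_def)

definition rc :: "('v \<Rightarrow> 'v) \<times> ('e \<Rightarrow> 'e) \<Rightarrow> ('v,'e) gmap \<Rightarrow> ('v,'e) gmap" where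
  "rc r \<phi> = (fst \<phi> \<circ> fst r, snd \<phi> \<circ> snd r)"

lemma rc_mor: "graph_mor A B r \<Longrightarrow> graph_mor B C \<phi> \<Longrightarrow> graph_mor A C (rc r \<phi>)"
  by (auto simp: graph_mor_def rc_def)

lemma hcomp_rc: "hcomp h (rc r \<phi>) = rc r (hcomp h \<phi>)"
  by (simp add: hcomp_def rc_def o_assoc)

lemma sub_hom: "sub_sgd R T \<Longrightarrow> sgd_hom R T (id, id)"
  by (auto simp: sub_sgd_def sgd_hom_def graph_mor_def ugraph_def)

lemma hcomp_id[simp]: "hcomp (id, id) \<phi> = \<phi>"
  by (simp add: hcomp_def)

definition phi0 :: "('v, 'e) graph \<Rightarrow> ('v, 'e) gmap" where
  "phi0 B = (\<lambda>_. 0, \<lambda>e. if e \<in> gE B then 1 else 0)"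

lemma phi0_mor: "graph_mor A (ugraph S0) (phi0 B)"
  by (auto simp: graph_mor_def ugraph_def S0_def phi0_def)

lemma S0_in: "contains_Sl V \<Longrightarrow> S0 \<in> V"
  using S0_sl by (simp add: contains_Sl_def)

lemma key:
  assumes pv: "pseudovariety V" and sl: "contains_Sl V"
    and rm: "graph_mor A B r" and rB: "\<forall>e\<in>gE B. snd r e = e"
    and x: "(u, v, w) \<in> free_pro V A" and w0: "w (S0, phi0 B) = 1"
    and ix: "(S, \<phi>) \<in> idx V A" and phiB: "graph_mor B (ugraph S) \<phi>"
  shows "w (S, rc r \<phi>) = w (S, \<phi>)"
proof -
  have SV: "S \<in> V" and phm: "graph_mor A (ugraph S) \<phi>" using ix by (auto simp: idx_iff)
  have fS: "finite_sgd S" using pv SV unfolding pseudovariety_def by blast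
  then have sgS: "semigroupoid S" by (simp add: finite_sgd_def)
  have rcm: "graph_mor A (ugraph S) (rc r \<phi>)" using rc_mor[OF rm phiB] .
  have S0V: "S0 \<in> V" using S0_in[OF sl] .
  define SS where "SS = nprod S S"
  define P where "P = nprod SS S0"
  define D where "D = Dsub S"
  have SSV: "SS \<in> V" unfolding SS_def using nprod_in[OF pv SV SV] .
  have PV: "P \<in> V" unfolding P_def using nprod_in[OF pv SSV S0V] .
  have fP: "finite_sgd P" using pv PV unfolding pseudovariety_def by blast
  have subD: "sub_sgd D P" unfolding D_def P_def SS_def using Dsub_sub[OF sgS] .
  have fD: "finite_sgd D"
  proof -
    have "semigroupoid D" using subD by (simp add: sub_sgd_def)
    moreover have "finite (sV D)" "finite (sE D)" using fP subD
      unfolding finite_sgd_def sub_sgd_def by (auto intro: finite_subset)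
    ultimately show ?thesis by (simp add: finite_sgd_def)
  qed
  have divD: "sgd_divides D P"
    unfolding sgd_divides_def
    apply (rule exI[of _ D], rule exI[of _ "(id, id)"])
    using subD sub_hom[of D D] fD by (auto simp: sub_sgd_def finite_sgd_def)
  have DV: "D \<in> V" using pv PV fD divD unfolding pseudovariety_def by blast
  define \<psi> where "\<psi> = npair (npair \<phi> (rc r \<phi>)) (phi0 B)"
  have psiSS: "graph_mor A (ugraph SS) (npair \<phi> (rc r \<phi>))" unfolding SS_def
    using npair_mor[OF phm rcm] .
  have psiP: "graph_mor A (ugraph P) \<psi>" unfolding P_def \<psi>_def
    using npair_mor[OF psiSS phi0_mor] .
  have psiD: "graph_mor A (ugraph D) \<psi>"
  proof -
    have "snd \<psi> e \<in> sE D" if e: "e \<in> gE A" for e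
    proof -
      have a: "snd \<phi> e \<in> sE S" "snd \<phi> (snd r e) \<in> sE S" using phm rcm e
        by (auto simp: graph_mor_def ugraph_def rc_def)
      show ?thesis unfolding D_def Dsub_E
        using a rB by (auto simp: \<psi>_def npair_def rc_def phi0_def)
    qed
    then show ?thesis using psiP unfolding graph_mor_def ugraph_def D_def
      by (simp add: Dsub_simps P_def SS_def)
  qed
  have ixD: "(D, \<psi>) \<in> idx V A" using DV psiD by (simp add: idx_iff)
  have ixP: "(P, \<psi>) \<in> idx V A" using PV psiP by (simp add: idx_iff)
  have ixSS: "(SS, npair \<phi> (rc r \<phi>)) \<in> idx V A" using SSV psiSS by (simp add: idx_iff)
  have "w (P, \<psi>) = w (D, \<psi>)"
    using free_proD(8)[OF x ixD PV sub_hom[OF subD]] by simp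
  then have wD: "w (P, \<psi>) \<in> sE D" using free_proD(4)[OF x ixD] by simp
  then obtain a b c where abc: "w (P, \<psi>) = prod_encode (prod_encode (a,b),c)" "c \<noteq> 0 \<longrightarrow> a = b"
    unfolding D_def Dsub_E by blast
  have "snd np2 (w (P, \<psi>)) = w (S0, phi0 B)"
    using free_proD(8)[OF x ixP S0V np2_hom[of SS S0, folded P_def]] by (simp add: \<psi>_def)
  then have c1: "c = 1" using w0 abc by (simp add: np2_def)
  have "snd np1 (w (P, \<psi>)) = w (SS, npair \<phi> (rc r \<phi>))"
    using free_proD(8)[OF x ixP SSV np1_hom[of SS S0, folded P_def]] by (simp add: \<psi>_def)
  then have wSS: "w (SS, npair \<phi> (rc r \<phi>)) = prod_encode (a, b)" using abc by (simp add: np1_def)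
  have "snd np1 (w (SS, npair \<phi> (rc r \<phi>))) = w (S, \<phi>)"
    using free_proD(8)[OF x ixSS SV np1_hom[of S S, folded SS_def]] by simp
  then have 1: "w (S, \<phi>) = a" using wSS by (simp add: np1_def)
  have "snd np2 (w (SS, npair \<phi> (rc r \<phi>))) = w (S, rc r \<phi>)"
    using free_proD(8)[OF x ixSS SV np2_hom[of S S, folded SS_def]] by simp
  then have 2: "w (S, rc r \<phi>) = b" using wSS by (simp add: np2_def)
  show ?thesis using 1 2 abc c1 by simp
qed

lemma incl_in:
  assumes sub: "subgraph B A" and x: "(u, v, w) \<in> free_pro V B"
  shows "(u, v, restrict w (idx V A)) \<in> free_pro V A"
proof -
  have ib: "(S, \<phi>) \<in> idx V B" if "(S, \<phi>) \<in> idx V A" for S \<phi>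
    using that sub_mor[OF sub, of "ugraph S" \<phi>] by (simp add: idx_iff)
  have ag: "agree_on B \<phi> \<psi>" if "agree_on A \<phi> \<psi>" for \<phi> \<psi>
    using that sub by (auto simp: agree_on_def subgraph_def)
  have ih: "(T, hcomp h \<phi>) \<in> idx V A" if "(S, \<phi>) \<in> idx V A" "T \<in> V" "sgd_hom S T h" for S T h \<phi>
    using that hcomp_mor[of _ S \<phi> T h] by (simp add: idx_iff)
  have uv: "u \<in> gV A" "v \<in> gV A" using free_proD(1,2)[OF x] sub by (auto simp: subgraph_def)
  have c1: "\<forall>(S, \<phi>)\<in>idx V A. restrict w (idx V A) (S, \<phi>) \<in> sE S \<and> ssrc S (restrict w (idx V A) (S, \<phi>)) = fst \<phi> u \<and>
                          stgt S (restrict w (idx V A) (S, \<phi>)) = fst \<phi> v"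
    using free_proD(4,5,6)[OF x] ib by auto
  have c2: "\<forall>(S, \<phi>)\<in>idx V A. \<forall>\<psi>. (S, \<psi>) \<in> idx V A \<longrightarrow> agree_on A \<phi> \<psi> \<longrightarrow> restrict w (idx V A) (S, \<phi>) = restrict w (idx V A) (S, \<psi>)"
    using free_proD(7)[OF x] ib ag by auto
  have c3: "\<forall>(S, \<phi>)\<in>idx V A. \<forall>T h. T \<in> V \<longrightarrow> sgd_hom S T h \<longrightarrow>
        snd h (restrict w (idx V A) (S, \<phi>)) = restrict w (idx V A) (T, hcomp h \<phi>)"
    using free_proD(8)[OF x] ib ih by auto
  show ?thesis unfolding free_pro_def using uv c1 c2 c3 by simp
qed

definition phi1 :: "('v, 'e) gmap" where
  "phi1 = (\<lambda>_. 0, \<lambda>_. 1)"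

lemma w0_B:
  assumes pv: "pseudovariety V" and sl: "contains_Sl V" and x: "(u, v, w) \<in> free_pro V B"
  shows "w (S0, phi0 B) = 1"
proof -
  have S0V: "S0 \<in> V" using S0_in[OF sl] .
  have i0: "(S0, phi0 B) \<in> idx V B" using S0V phi0_mor by (simp add: idx_iff)
  have i1: "(S0, phi1) \<in> idx V B" using S0V by (auto simp: idx_iff graph_mor_def ugraph_def S0_def phi1_def)
  have ag: "agree_on B (phi0 B) phi1" by (simp add: agree_on_def phi0_def phi1_def)
  have iD: "(D1, phi1) \<in> idx V B" using D1_in[OF pv] by (auto simp: idx_iff graph_mor_def ugraph_def D1_def phi1_def)
  have "w (S0, phi1) = w (D1, phi1)"
    using free_proD(8)[OF x iD S0V D1_hom] by simp
  also have "\<dots> = 1" using free_proD(4)[OF x iD] by (simp add: D1_def)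
  finally show ?thesis using free_proD(7)[OF x i0 i1 ag] by simp
qed

theorem mainTheorem7:
  fixes \<V> :: "(nat, nat) sgd set" and A B :: "('v, 'e) graph"
  assumes "pseudovariety \<V>"
    and "contains_Sl \<V>"
    and "finite_vertex_graph A"
    and "retract_subgraph B A"
  shows "openin (free_pro_top \<V> A) (incl_map \<V> A ` free_pro \<V> B)"
proof -
  note pv = assms(1) and sl = assms(2)
  have sub: "subgraph B A" using assms(4) by (simp add: retract_subgraph_def)
  obtain r where rm: "graph_mor A B r" and rV: "\<forall>x\<in>gV B. fst r x = x" and rB: "\<forall>e\<in>gE B. snd r e = e"
    using assms(4) unfolding retract_subgraph_def by blast
  have VBA: "gV B \<subseteq> gV A" using sub by (simp add: subgraph_def)
  define Prod where "Prod = product_topology (\<lambda>(S::(nat,nat) sgd, \<phi>::('v,'e) gmap). discrete_topology (sE S)) (idx \<V> A)"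
  define k0 where "k0 = (S0, phi0 B)"
  have k0: "k0 \<in> idx \<V> A" unfolding k0_def using S0_in[OF sl] phi0_mor by (simp add: idx_iff)
  define U where "U = gV B \<times> gV B \<times> {w \<in> topspace Prod. w k0 = 1}"
  have oU: "openin (prod_topology (discrete_topology (gV A)) (prod_topology (discrete_topology (gV A)) Prod)) U"
    unfolding U_def Prod_def using open_coord[OF k0] VBA by (simp add: openin_prod_Times_iff)
  have eq: "incl_map \<V> A ` free_pro \<V> B = U \<inter> free_pro \<V> A"
  proof
    show "incl_map \<V> A ` free_pro \<V> B \<subseteq> U \<inter> free_pro \<V> A"
    proof
      fix y assume "y \<in> incl_map \<V> A ` free_pro \<V> B"
      then obtain u v w where x: "(u, v, w) \<in> free_pro \<V> B" and y: "y = (u, v, restrict w (idx \<V> A))"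
        by (auto simp: incl_map_def)
      have yA: "y \<in> free_pro \<V> A" using incl_in[OF sub x] y by simp
      have "restrict w (idx \<V> A) \<in> topspace Prod"
        using free_proD(3,4,5,6)[OF yA[unfolded y]] unfolding Prod_def
        by (auto simp: PiE_iff)
      moreover have "restrict w (idx \<V> A) k0 = 1" using w0_B[OF pv sl x] k0 by (simp add: k0_def)
      moreover have "u \<in> gV B" "v \<in> gV B" using free_proD(1,2)[OF x] by auto
      ultimately show "y \<in> U \<inter> free_pro \<V> A" using yA y by (simp add: U_def)
    qed
  next
    show "U \<inter> free_pro \<V> A \<subseteq> incl_map \<V> A ` free_pro \<V> B"
    proof
      fix y assume yU: "y \<in> U \<inter> free_pro \<V> A"
      then obtain u v w where y: "y = (u, v, w)" by (cases y) auto
      have x: "(u, v, w) \<in> free_pro \<V> A" using yU y by simp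
      have uB: "u \<in> gV B" and vB: "v \<in> gV B" and w0: "w (S0, phi0 B) = 1"
        using yU y by (auto simp: U_def k0_def)
      define w' where "w' = restrict (\<lambda>(S, \<phi>). w (S, rc r \<phi>)) (idx \<V> B)"
      have ia: "(S, rc r \<phi>) \<in> idx \<V> A" if "(S, \<phi>) \<in> idx \<V> B" for S \<phi>
        using that rc_mor[OF rm] by (simp add: idx_iff)
      have c1: "\<forall>(S, \<phi>)\<in>idx \<V> B. w' (S, \<phi>) \<in> sE S \<and> ssrc S (w' (S, \<phi>)) = fst \<phi> u \<and>
                          stgt S (w' (S, \<phi>)) = fst \<phi> v"
        using free_proD(4,5,6)[OF x] ia uB vB rV by (auto simp: w'_def rc_def)
      have agr: "agree_on A (rc r \<phi>) (rc r \<psi>)" if "agree_on B \<phi> \<psi>" for \<phi> \<psi>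
        using that rm by (auto simp: agree_on_def rc_def graph_mor_def)
      have c2: "\<forall>(S, \<phi>)\<in>idx \<V> B. \<forall>\<psi>. (S, \<psi>) \<in> idx \<V> B \<longrightarrow> agree_on B \<phi> \<psi> \<longrightarrow> w' (S, \<phi>) = w' (S, \<psi>)"
        using free_proD(7)[OF x] ia agr by (auto simp: w'_def)
      have ih: "(T, hcomp h \<phi>) \<in> idx \<V> B" if "(S, \<phi>) \<in> idx \<V> B" "T \<in> \<V>" "sgd_hom S T h" for S T h \<phi>
        using that hcomp_mor[of _ S \<phi> T h] by (simp add: idx_iff)
      have c3: "\<forall>(S, \<phi>)\<in>idx \<V> B. \<forall>T h. T \<in> \<V> \<longrightarrow> sgd_hom S T h \<longrightarrow>
          snd h (w' (S, \<phi>)) = w' (T, hcomp h \<phi>)"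
      proof -
        have c3': "snd h (w' (S, \<phi>)) = w' (T, hcomp h \<phi>)"
          if a: "(S, \<phi>) \<in> idx \<V> B" "T \<in> \<V>" "sgd_hom S T h" for S \<phi> T h
        proof -
          have "snd h (w (S, rc r \<phi>)) = w (T, hcomp h (rc r \<phi>))"
            using free_proD(8)[OF x ia[OF a(1)] a(2,3)] .
          then show ?thesis using a ih[OF a] by (simp add: w'_def hcomp_rc)
        qed
        show ?thesis using c3' by blast
      qed
      have xB: "(u, v, w') \<in> free_pro \<V> B"
        unfolding free_pro_def using uB vB c1 c2 c3 by (simp add: w'_def)
      have "restrict w' (idx \<V> A) = w"
      proof
        fix k show "restrict w' (idx \<V> A) k = w k"
        proof (cases "k \<in> idx \<V> A")
          case True
          then obtain S \<phi> where k: "k = (S, \<phi>)" by (cases k) auto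
          have kB: "(S, \<phi>) \<in> idx \<V> B" using True k sub_mor[OF sub, of "ugraph S" \<phi>] by (simp add: idx_iff)
          then have phiB: "graph_mor B (ugraph S) \<phi>" by (simp add: idx_iff)
          show ?thesis using key[OF pv sl rm rB x w0 True[unfolded k] phiB] True kB k
            by (simp add: w'_def)
        next
          case False
          then show ?thesis using free_proD(3)[OF x] extensional_arb[of w "idx \<V> A" k] by simp
        qed
      qed
      then have "y = incl_map \<V> A (u, v, w')" using y by (simp add: incl_map_def)
      then show "y \<in> incl_map \<V> A ` free_pro \<V> B" using xB by blast
    qed
  qed
  show ?thesis unfolding free_pro_top_def openin_subtopology
    using oU eq unfolding Prod_def by blast
qed

end
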